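(* Let $k\ge2$ channels and $2\le n\le k$ players, each with one packet. In every slot $t\ge1$, every pending player transmits on each channel with probability $1/k$ (so she always transmits, on a uniformly random channel), independently; a player transmitting alone on a channel succeeds and stops, while players colliding on a channel remain pending. Then the expected time until all players have transmitted successfully is at most $\frac{1}{1-\ln(e-1)}\ln\left(\frac{n}{2}\right)+\left(1-\frac1k\right)^{-1}$.
   Context: $e$ denotes Euler's number. *)

theory Defs
  imports "HOL-Probability.Probability"
begin

text \<open>Sample space: omega t i is the channel (in 0..k-1) chosen by player i in slot t+1.
  All choices are independent and uniform on the k channels.\<close>
definition chan_space :: "nat \<Rightarrow> (nat \<Rightarrow> nat \<Rightarrow> nat) measure" where
  "chan_space k = (\<Pi>\<^sub>M t\<in>UNIV. \<Pi>\<^sub>M i\<in>UNIV. measure_pmf (pmf_of_set {..<k}))"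

fun pending :: "nat \<Rightarrow> (nat \<Rightarrow> nat \<Rightarrow> nat) \<Rightarrow> nat \<Rightarrow> nat set" where
  "pending n \<omega> 0 = {..<n}"
| "pending n \<omega> (Suc t) =
     {i \<in> pending n \<omega> t. \<exists>j \<in> pending n \<omega> t. j \<noteq> i \<and> \<omega> t j = \<omega> t i}"

definition completion_time :: "nat \<Rightarrow> (nat \<Rightarrow> nat \<Rightarrow> nat) \<Rightarrow> ennreal" where
  "completion_time n \<omega> =
     (if \<exists>t. pending n \<omega> t = {} then of_nat (LEAST t. pending n \<omega> t = {}) else \<infinity>)"

end

theory Submission
  imports Defs "HOL-Analysis.Analysis"
begin

definition step :: "nat set \<Rightarrow> (nat \<Rightarrow> nat) \<Rightarrow> nat set" where
  "step S x = {i \<in> S. \<exists>j \<in> S. j \<noteq> i \<and> x j = x i}"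

fun pend :: "nat set \<Rightarrow> (nat \<Rightarrow> nat \<Rightarrow> nat) \<Rightarrow> nat \<Rightarrow> nat set" where
  "pend S \<omega> 0 = S"
| "pend S \<omega> (Suc t) = step (pend S \<omega> t) (\<omega> t)"

lemma pending_pend: "pending n \<omega> t = pend {..<n} \<omega> t"
  by (induction t) (auto simp: step_def)

lemma step_subset: "step S x \<subseteq> S" by (auto simp: step_def)

lemma pend_subset: "pend S \<omega> t \<subseteq> S"
  by (induction t) (use step_subset in auto)

lemma pend_shift: "pend S (case_nat s \<omega>) (Suc t) = pend (step S s) \<omega> t"
  by (induction t) auto

definition U :: "nat \<Rightarrow> nat measure" where "U k = measure_pmf (pmf_of_set {..<k})"
definition CC :: "nat \<Rightarrow> (nat \<Rightarrow> nat) measure" where "CC k = (\<Pi>\<^sub>M i\<in>UNIV. U k)"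

lemma chan_space_CC: "chan_space k = (\<Pi>\<^sub>M t\<in>UNIV. CC k)"
  by (simp add: chan_space_def CC_def U_def)

lemma sets_U[simp]: "sets (U k) = UNIV" by (simp add: U_def)
lemma space_U[simp]: "space (U k) = UNIV" by (simp add: U_def)

lemma meas_CC: "(\<lambda>\<omega>. \<omega> t) \<in> measurable (chan_space k) (CC k)"
  unfolding chan_space_CC by (rule measurable_component_singleton) simp

lemma sets_coord_val: "{\<omega> \<in> space (chan_space k). \<omega> t j = v} \<in> sets (chan_space k)"
proof -
  have "(\<lambda>x. x j) \<in> measurable (CC k) (U k)"
    unfolding CC_def by (rule measurable_component_singleton) simp
  then have "(\<lambda>\<omega>. \<omega> t j) \<in> measurable (chan_space k) (U k)"
    using meas_CC by (rule measurable_compose[rotated])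
  then have "(\<lambda>\<omega>. \<omega> t j) -` {v} \<inter> space (chan_space k) \<in> sets (chan_space k)"
    by (rule measurable_sets) simp
  moreover have "(\<lambda>\<omega>. \<omega> t j) -` {v} \<inter> space (chan_space k) = {\<omega> \<in> space (chan_space k). \<omega> t j = v}"
    by auto
  ultimately show ?thesis by simp
qed

lemma sets_coord_eq: "{\<omega> \<in> space (chan_space k). \<omega> t i = \<omega> t j} \<in> sets (chan_space k)"
proof -
  have "{\<omega> \<in> space (chan_space k). \<omega> t i = \<omega> t j} =
     (\<Union>v::nat. {\<omega> \<in> space (chan_space k). \<omega> t i = v} \<inter> {\<omega> \<in> space (chan_space k). \<omega> t j = v})"
    by auto
  also have "\<dots> \<in> sets (chan_space k)"
    using sets_coord_val by (intro sets.countable_UN') auto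
  finally show ?thesis .
qed

lemma sets_step_eq:
  assumes "finite B"
  shows "{\<omega> \<in> space (chan_space k). step B (\<omega> t) = A} \<in> sets (chan_space k)"
proof (cases "A \<subseteq> B")
  case True
  define E where "E i = (\<Union>j\<in>B-{i}. {\<omega> \<in> space (chan_space k). \<omega> t j = \<omega> t i})" for i
  have E: "E i \<in> sets (chan_space k)" for i
    unfolding E_def using assms by (intro sets.finite_UN sets_coord_eq) auto
  have "{\<omega> \<in> space (chan_space k). step B (\<omega> t) = A} =
     {\<omega> \<in> space (chan_space k). \<forall>i\<in>B. \<omega> \<in> (if i \<in> A then E i else space (chan_space k) - E i)}"
    using True by (auto simp: step_def E_def split: if_splits)
  also have "\<dots> \<in> sets (chan_space k)"
  proof (rule sets.sets_Collect_finite_All[OF _ assms])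
    fix i show "{\<omega> \<in> space (chan_space k). \<omega> \<in> (if i \<in> A then E i else space (chan_space k) - E i)} \<in> sets (chan_space k)"
      using E[of i] sets.sets_into_space[OF E[of i]] by (auto simp: Int_absorb1 Collect_conj_eq[symmetric] Int_def[symmetric])
  qed
  finally show ?thesis .
next
  case False
  then have "{\<omega> \<in> space (chan_space k). step B (\<omega> t) = A} = {}"
    using step_subset by blast
  then show ?thesis by (simp only:) simp
qed

lemma sets_pend_eq:
  assumes "finite S"
  shows "{\<omega> \<in> space (chan_space k). pend S \<omega> t = A} \<in> sets (chan_space k)"
proof (induction t arbitrary: A)
  case 0
  then show ?case by (cases "S = A") auto
next
  case (Suc t)
  have "{\<omega> \<in> space (chan_space k). pend S \<omega> (Suc t) = A} =
    (\<Union>B\<in>Pow S. {\<omega> \<in> space (chan_space k). pend S \<omega> t = B} \<inter> {\<omega> \<in> space (chan_space k). step B (\<omega> t) = A})"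
    using pend_subset[of S] by auto
  also have "\<dots> \<in> sets (chan_space k)"
    using assms Suc by (intro sets.finite_UN sets.Int sets_step_eq) (auto intro: finite_subset)
  finally show ?case .
qed

lemma exp_upper6:
  fixes x :: real assumes "0 \<le> x" "x \<le> 1"
  shows "exp x \<le> (\<Sum>i\<le>6. x ^ i / fact i) + 3 * x ^ 7 / 720"
proof -
  have "norm (exp x - (\<Sum>i\<le>6. x ^ i / fact i)) \<le> exp (norm x) * (norm x ^ Suc 6) / fact 6"
    by (rule Taylor_exp_field)
  also have "\<dots> = exp x * x ^ 7 / 720"
    using assms by (simp add: fact_numeral)
  also have "\<dots> \<le> 3 * x ^ 7 / 720"
    using assms exp_le by (intro divide_right_mono mult_right_mono) (auto intro: order_trans[OF exp_mono[OF assms(2)]])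
  finally have "\<bar>exp x - (\<Sum>i\<le>6. x ^ i / fact i)\<bar> \<le> 3 * x ^ 7 / 720" by simp
  then show ?thesis by linarith
qed

lemma exp_lower6:
  fixes x :: real assumes "0 \<le> x"
  shows "(\<Sum>i<7. x ^ i / fact i) \<le> exp x"
proof -
  obtain t where "\<bar>t\<bar> \<le> \<bar>x\<bar>" "exp x = (\<Sum>m<7. (x ^ m) / fact m) + (exp t / fact 7) * x ^ 7"
    using Maclaurin_exp_le[of x 7] by blast
  moreover have "0 \<le> (exp t / fact 7) * x ^ 7" using assms by simp
  ultimately show ?thesis by linarith
qed

lemma e_bounds: "271828 / 100000 \<le> exp (1::real)" "exp (1::real) \<le> 271829 / 100000"
  using e_approx_32 by (simp_all add: abs_if split: if_splits)

definition cc :: real where "cc = 1 - ln (exp 1 - 1)"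

lemma exp_up: "0 \<le> x \<Longrightarrow> x \<le> 1 \<Longrightarrow> (\<Sum>i\<le>6. x ^ i / fact i) + 3 * x ^ 7 / 720 \<le> b \<Longrightarrow> exp x \<le> (b::real)"
  using exp_upper6[of x] by linarith

lemma exp_lo: "0 \<le> x \<Longrightarrow> b \<le> (\<Sum>i<7. x ^ i / fact i) \<Longrightarrow> b \<le> exp (x::real)"
  using exp_lower6[of x] by linarith

lemma cc_bounds: "45/100 \<le> cc" "cc \<le> 465/1000"
proof -
  have d: "171828 / 100000 \<le> exp (1::real) - 1" "exp (1::real) - 1 \<le> 171829 / 100000"
    using e_bounds by auto
  have "exp (535/1000::real) \<le> 1718 / 1000"
    by (rule exp_up) (simp_all add: fact_numeral atMost_nat_numeral power_divide)
  then have "535/1000 \<le> ln (exp 1 - 1::real)"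
    using d ln_ge_iff[of "exp 1 - 1" "535/1000"] by linarith
  moreover have "171829 / 100000 \<le> exp (55/100::real)"
    by (rule exp_lo) (simp_all add: fact_numeral lessThan_nat_numeral power_divide)
  then have "ln (exp 1 - 1::real) \<le> ln (exp (55/100))"
    using d by (intro ln_mono) linarith+
  then have "ln (exp 1 - 1::real) \<le> 55/100"
    by (simp only: ln_exp)
  ultimately show "45/100 \<le> cc" "cc \<le> 465/1000" unfolding cc_def by auto
qed

lemma ln_consts: "35/100 \<le> ln (3/2::real)" "69/100 \<le> ln (2::real)" "9/10 \<le> ln (5/2::real)"
proof -
  have "exp (35/100::real) \<le> 3/2"
    by (rule exp_up) (simp_all add: fact_numeral atMost_nat_numeral power_divide)
  then show "35/100 \<le> ln (3/2::real)" using ln_ge_iff[of "3/2" "35/100"] by linarith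
  have "exp (69/100::real) \<le> 2"
    by (rule exp_up) (simp_all add: fact_numeral atMost_nat_numeral power_divide)
  then show "69/100 \<le> ln (2::real)" using ln_ge_iff[of "2" "69/100"] by linarith
  have "exp (9/10::real) \<le> 5/2"
    by (rule exp_up) (simp_all add: fact_numeral atMost_nat_numeral power_divide)
  then show "9/10 \<le> ln (5/2::real)" using ln_ge_iff[of "5/2" "9/10"] by linarith
qed

definition aa :: "nat \<Rightarrow> real" where "aa k = inverse (1 - 1 / real k)"

definition G :: "nat \<Rightarrow> nat \<Rightarrow> real" where
  "G k j = (if j = 0 then 0 else if j = 1 then 1 else ln (real j / 2) / cc + aa k)"

lemma aa_eq: "2 \<le> k \<Longrightarrow> aa k = real k / (real k - 1)"
  by (simp add: aa_def field_simps)

lemma cc_pos: "0 < cc" using cc_bounds by linarith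

lemma q_ge_exp: assumes "2 \<le> k" "1 \<le> m" "m \<le> k"
  shows "exp (-1) \<le> (1 - 1 / real k) ^ (m - 1)"
proof -
  have r: "0 < 1 - 1 / real k" "1 - 1 / real k \<le> 1" using assms by (auto simp: field_simps)
  have "(1 - 1 / real k) ^ (k - 1) \<le> (1 - 1 / real k) ^ (m - 1)"
    using r assms by (intro power_decreasing) auto
  moreover have "exp (-1) \<le> (1 - 1 / real k) ^ (k - 1)"
  proof -
    define n where "n = k - 1"
    have n: "real n = real k - 1" "1 \<le> n" using assms by (auto simp: n_def)
    have "(1 + 1 / real n) ^ n \<le> exp (1 / real n) ^ n"
      by (intro power_mono) (use exp_ge_add_one_self in auto)
    also have "\<dots> = exp 1" using n by (simp add: exp_of_nat_mult[symmetric])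
    finally have A: "(1 + 1 / real n) ^ n \<le> exp 1" .
    have B: "(1 - 1 / real k) * (1 + 1 / real n) = 1"
    proof -
      have "real k - 1 > 0" using assms by simp
      then show ?thesis using assms by (simp add: n(1) field_simps)
    qed
    have "(1 - 1 / real k) ^ n * (1 + 1 / real n) ^ n = 1"
      by (simp add: power_mult_distrib[symmetric] B)
    then have "(1 - 1 / real k) ^ n = inverse ((1 + 1 / real n) ^ n)"
      using inverse_unique[of "(1 + 1 / real n) ^ n" "(1 - 1 / real k) ^ n"] by (simp add: mult.commute)
    moreover have "exp (-1) \<le> inverse ((1 + 1 / real n) ^ n)"
    proof -
      have "0 < (1 + 1 / real n) ^ n" by (intro zero_less_power) (simp add: add_pos_nonneg)
      then show ?thesis unfolding exp_minus by (rule le_imp_inverse_le[OF A])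
    qed
    ultimately show ?thesis by (simp add: n_def)
  qed
  ultimately show ?thesis by linarith
qed

lemma exp_le_inv: fixes u :: real assumes "0 \<le> u" "u < 1" shows "exp u \<le> 1 / (1 - u)"
proof -
  have "1 - u \<le> exp (- u)" using exp_ge_add_one_self[of "-u"] by simp
  then have "inverse (exp (-u)) \<le> inverse (1 - u)" using assms by (intro le_imp_inverse_le) auto
  then show ?thesis by (simp add: exp_minus divide_inverse)
qed

lemma small_case:
  fixes u E umax umin Emax Lm x :: real
  assumes "umin \<le> u" "u \<le> umax" "0 \<le> umin" "umax < 1" "0 \<le> E" "E \<le> Emax"
    "Emax / (2 * (171828/100000) * (1 - umax)) \<le> Lm + umin" "Lm \<le> x"
  shows "exp u / (exp 1 - 1) * E / 2 \<le> x + u"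
proof -
  have d: "171828 / 100000 \<le> exp (1::real) - 1" using e_bounds by auto
  have "exp u \<le> 1 / (1 - umax)"
    using exp_le_inv[of u] assms by (smt (verit) divide_left_mono mult_pos_pos)
  then have "exp u / (exp 1 - 1) * E / 2 \<le> (1 / (1 - umax)) / (171828/100000) * Emax / 2"
    using assms d by (intro divide_right_mono mult_mono frac_le) auto
  also have "\<dots> = Emax / (2 * (171828/100000) * (1 - umax))" using assms(4) by (simp add: field_simps)
  finally show ?thesis using assms by linarith
qed


lemma aa_facts: assumes "2 \<le> k"
  shows "aa k * (1 - 1 / real k) = 1" "1 \<le> aa k" "aa k - 1 = 1 / (real k - 1)" "aa k / real k = aa k - 1"
proof -
  have k: "real k - 1 > 0" "real k > 0" using assms by auto
  show "aa k * (1 - 1 / real k) = 1" "1 \<le> aa k" "aa k - 1 = 1 / (real k - 1)" "aa k / real k = aa k - 1"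
    using k by (auto simp: aa_eq[OF assms] field_simps)
qed

lemma G_ge2: "2 \<le> j \<Longrightarrow> G k j = ln (real j / 2) / cc + aa k"
  by (simp add: G_def)

lemma exp_cc: "exp (aa k * cc - 1) = exp ((aa k - 1) * cc) / (exp 1 - 1)"
proof -
  have "aa k * cc - 1 = (aa k - 1) * cc - ln (exp 1 - 1)" by (simp add: cc_def algebra_simps)
  moreover have "exp 1 - 1 > (0::real)" using e_bounds by linarith
  ultimately show ?thesis by (simp add: exp_diff)
qed

lemma exp_minus_cc: "exp (- cc) = 1 - exp (-1)"
proof -
  have d: "exp 1 - 1 > (0::real)" using e_bounds by linarith
  have "- cc = ln (exp 1 - 1) + (-1)" by (simp add: cc_def)
  then have "exp (- cc) = exp (ln (exp 1 - 1)) * exp (-1)" by (simp only: exp_add)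
  then have "exp (- cc) = (exp 1 - 1) * exp (-1)" using d by simp
  also have "\<dots> = 1 - exp (-1)" by (simp add: algebra_simps exp_minus)
  finally show ?thesis .
qed

lemma drift_real:
  assumes "2 \<le> m" "m \<le> k"
  shows "\<exists>\<alpha> \<beta>. 0 \<le> \<alpha> \<and> 0 \<le> \<beta> \<and> (\<forall>j. (j = 0 \<or> (2 \<le> j \<and> j \<le> m)) \<longrightarrow> G k j \<le> \<alpha> + \<beta> * real j)
     \<and> \<alpha> + \<beta> * (real m * (1 - (1 - 1 / real k) ^ (m - 1))) \<le> G k m - 1"
proof -
  have k2: "2 \<le> k" using assms by linarith
  note af = aa_facts[OF k2]
  note ccb = cc_bounds
  have ccp: "0 < cc" by (rule cc_pos)
  define r where "r = 1 - 1 / real k"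
  have r: "0 < r" "r \<le> 1" using k2 by (auto simp: r_def field_simps)
  consider "m = 2" | "m = 3" | "m = 4 \<or> m = 5" | "6 \<le> m" using assms by linarith
  then show ?thesis
  proof cases
    case 1
    show ?thesis
    proof (intro exI conjI allI impI)
      show "0 \<le> (0::real)" "0 \<le> aa k / 2" using af by auto
      fix j assume "j = 0 \<or> (2 \<le> j \<and> j \<le> m)"
      then have "j = 0 \<or> j = 2" using 1 by auto
      then show "G k j \<le> 0 + aa k / 2 * real j" by (auto simp: G_def)
    next
      show "0 + aa k / 2 * (real m * (1 - (1 - 1 / real k) ^ (m - 1))) \<le> G k m - 1"
        using 1 af by (simp add: G_def)
    qed
  next
    case 2
    define L where "L = ln (3/2::real)"
    have L: "35/100 \<le> L" using ln_consts by (simp add: L_def)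
    have k3: "3 \<le> k" using assms 2 by linarith
    have aa32: "aa k \<le> 3/2" using k3 by (simp add: aa_eq[OF k2] field_simps)
    have t: "3/4 \<le> L / cc" using L ccb ccp by (simp add: field_simps)
    have G3: "G k 3 = L / cc + aa k" by (simp add: G_def L_def)
    have r23: "2/3 \<le> r" using k3 by (simp add: r_def field_simps)
    show ?thesis
    proof (intro exI conjI allI impI)
      show "0 \<le> (0::real)" by simp
      show "0 \<le> G k 3 / 3" using G3 t af(2) by linarith
      fix j assume "j = 0 \<or> (2 \<le> j \<and> j \<le> m)"
      then have "j = 0 \<or> j = 2 \<or> j = 3" using 2 by auto
      moreover have "G k 2 = aa k" by (simp add: G_def)
      moreover have "G k 2 \<le> 0 + G k 3 / 3 * real (2::nat)" using \<open>G k 2 = aa k\<close> G3 t aa32 by simp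
      ultimately show "G k j \<le> 0 + G k 3 / 3 * real j"
        by (auto simp: G_def)
    next
      have "3/4 * r^2 \<le> L / cc * r^2" using t by (intro mult_right_mono) auto
      moreover have "0 \<le> (3 * r - 2) * (r + 2)" using r23 r by (intro mult_nonneg_nonneg) auto
      then have "0 \<le> 3 * r^2 + 4 * r - 4" by (simp add: algebra_simps power2_eq_square)
      ultimately have "1 \<le> L / cc * r^2 + r" by linarith
      moreover have "aa k * r ^ 2 = r" using af by (simp add: r_def power2_eq_square)
      ultimately have "1 \<le> G k 3 * r ^ 2" using G3 by (simp add: algebra_simps)
      then show "0 + G k 3 / 3 * (real m * (1 - (1 - 1 / real k) ^ (m - 1))) \<le> G k m - 1"
        using 2 by (simp add: r_def[symmetric] algebra_simps)
    qed
  next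
    case 3
    define \<beta> where "\<beta> = exp (aa k * cc - 1) / (2 * cc)"
    define u where "u = (aa k - 1) * cc"
    have u: "u = cc / (real k - 1)" using af by (simp add: u_def)
    have E0: "0 \<le> real m * (1 - r ^ (m - 1))" using r by (simp add: power_le_one)
    have key: "exp u / (exp 1 - 1) * (real m * (1 - r ^ (m - 1))) / 2 \<le> ln (real m / 2) + u"
    proof -
      consider "m = 4" "k = 4" | "m = 4" "5 \<le> k" | "m = 5" "k = 5" | "m = 5" "6 \<le> k"
        using 3 assms by linarith
      then show ?thesis
      proof cases
        case 1
        show ?thesis
          by (rule small_case[where umin="15/100" and umax="155/1000" and Emax="37/16" and Lm="69/100"])
            (use 1 ccb ln_consts in \<open>simp_all add: u r_def power_divide\<close>)
      next
        case 2
        have rr: "(4/5)^3 \<le> r ^ 3" using 2 by (intro power_mono) (auto simp: r_def field_simps)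
        have "cc / (real k - 1) \<le> cc / 4" using 2 ccp by (intro divide_left_mono) auto
        then have ub: "u \<le> 11625/100000" "0 \<le> u" using ccb ccp 2 unfolding u by (linarith, simp)
        have Eb: "real m * (1 - r ^ (m - 1)) \<le> 244/125" using rr 2 by (simp add: power_divide)
        show ?thesis
          by (rule small_case[where umin="0" and umax="11625/100000" and Emax="244/125" and Lm="69/100"])
            (use ub Eb E0 ln_consts 2 in auto)
      next
        case 3
        show ?thesis
          by (rule small_case[where umin="1125/10000" and umax="11625/100000" and Emax="369/125" and Lm="9/10"])
            (use 3 ccb ln_consts in \<open>simp_all add: u r_def power_divide\<close>)
      next
        case 4
        have rr: "(5/6)^4 \<le> r ^ 4" using 4 by (intro power_mono) (auto simp: r_def field_simps)
        have "cc / (real k - 1) \<le> cc / 5" using 4 ccp by (intro divide_left_mono) auto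
        then have ub: "u \<le> 93/1000" "0 \<le> u" using ccb ccp 4 unfolding u by (linarith, simp)
        have Eb: "real m * (1 - r ^ (m - 1)) \<le> 3355/1296" using rr 4 by (simp add: power_divide)
        show ?thesis
          by (rule small_case[where umin="0" and umax="93/1000" and Emax="3355/1296" and Lm="9/10"])
            (use ub Eb E0 ln_consts 4 in auto)
      qed
    qed
    show ?thesis
    proof (intro exI conjI allI impI)
      show "0 \<le> (0::real)" by simp
      show "0 \<le> \<beta>" using ccp by (simp add: \<beta>_def)
      fix j assume "j = 0 \<or> (2 \<le> j \<and> j \<le> m)"
      then show "G k j \<le> 0 + \<beta> * real j"
      proof
        assume "j = 0" then show ?thesis by (simp add: G_def)
      next
        assume j: "2 \<le> j \<and> j \<le> m"
        define y where "y = real j / 2 * exp (aa k * cc - 1)"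
        have yp: "0 < y" using j by (simp add: y_def)
        have "ln y = ln (real j / 2) + ln (exp (aa k * cc - 1))" unfolding y_def using j by (intro ln_mult_pos) auto
        then have "ln y = ln (real j / 2) + (aa k * cc - 1)" by (simp only: ln_exp)
        with ln_le_minus_one[OF yp] have "ln (real j / 2) + aa k * cc \<le> y" by linarith
        then have "(ln (real j / 2) + aa k * cc) / cc \<le> y / cc" using ccp by (intro divide_right_mono) auto
        then show ?thesis using j ccp by (simp add: G_def \<beta>_def y_def field_simps)
      qed
    next
      have "\<beta> * (real m * (1 - r ^ (m - 1))) = (exp u / (exp 1 - 1) * (real m * (1 - r ^ (m - 1))) / 2) / cc"
        by (simp add: \<beta>_def exp_cc u_def)
      also have "\<dots> \<le> (ln (real m / 2) + u) / cc" using key ccp by (intro divide_right_mono) auto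
      also have "\<dots> = G k m - 1" using assms ccp by (simp add: G_def u_def field_simps)
      finally show "0 + \<beta> * (real m * (1 - (1 - 1 / real k) ^ (m - 1))) \<le> G k m - 1"
        by (simp add: r_def)
    qed
  next
    case 4
    define \<mu> where "\<mu> = real m * exp (- cc)"
    have mup: "0 < \<mu>" using assms by (simp add: \<mu>_def)
    define \<alpha> where "\<alpha> = aa k + (ln (real m / 2) - cc - 1) / cc"
    have ln3: "1 < ln (real m / 2)"
    proof -
      have "ln 3 \<le> ln (real m / 2)" using 4 by (intro ln_mono) auto
      then show ?thesis using ln3_gt_1 by linarith
    qed
    show ?thesis
    proof (intro exI conjI allI impI)
      have "0 \<le> (ln (real m / 2) - 1) / cc" using ln3 ccp by simp
      moreover have "\<alpha> = (aa k - 1) + (ln (real m / 2) - 1) / cc" using ccp by (simp add: \<alpha>_def field_simps)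
      ultimately show "0 \<le> \<alpha>" using af by linarith
      show "0 \<le> 1 / (\<mu> * cc)" using mup ccp by simp
      fix j assume "j = 0 \<or> (2 \<le> j \<and> j \<le> m)"
      then show "G k j \<le> \<alpha> + 1 / (\<mu> * cc) * real j"
      proof
        assume "j = 0" then show ?thesis using \<open>0 \<le> \<alpha>\<close> by (simp add: G_def)
      next
        assume j: "2 \<le> j \<and> j \<le> m"
        have jp: "0 < real j / \<mu>" using j mup by simp
        have "ln (real j / \<mu>) = ln (real j / 2) - ln (real m / 2) + cc"
          using j assms mup by (simp add: \<mu>_def ln_div ln_mult)
        with ln_le_minus_one[OF jp] have "ln (real j / 2) \<le> ln (real m / 2) - cc - 1 + real j / \<mu>" by linarith
        then have "ln (real j / 2) / cc \<le> (ln (real m / 2) - cc - 1 + real j / \<mu>) / cc"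
          using ccp by (intro divide_right_mono) auto
        then show ?thesis using j ccp mup by (simp add: G_def \<alpha>_def add_divide_distrib diff_divide_distrib)
      qed
    next
      have q: "exp (-1) \<le> r ^ (m - 1)" using q_ge_exp[of k m] assms by (simp add: r_def)
      have "real m * (1 - r ^ (m - 1)) \<le> \<mu>" using q assms by (simp add: \<mu>_def exp_minus_cc)
      then have "1 / (\<mu> * cc) * (real m * (1 - r ^ (m - 1))) \<le> 1 / (\<mu> * cc) * \<mu>"
        using mup ccp by (intro mult_left_mono) auto
      also have "\<dots> = 1 / cc" using mup by simp
      finally have "\<alpha> + 1 / (\<mu> * cc) * (real m * (1 - r ^ (m - 1))) \<le> \<alpha> + 1 / cc" by simp
      also have "\<alpha> + 1 / cc = G k m - 1" using assms ccp by (simp add: G_def \<alpha>_def field_simps)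
      finally show "\<alpha> + 1 / (\<mu> * cc) * (real m * (1 - (1 - 1 / real k) ^ (m - 1))) \<le> G k m - 1"
        by (simp add: r_def)
    qed
  qed
qed

lemma prob_U: "prob_space (U k)" by (simp add: U_def prob_space_measure_pmf)
lemma prob_CC: "prob_space (CC k)" unfolding CC_def by (rule prob_space_PiM) (rule prob_U)
lemma space_CC[simp]: "space (CC k) = UNIV" by (simp add: CC_def space_PiM)

lemma card_step_ne1: assumes "finite S" shows "card (step S x) \<noteq> 1"
proof
  assume "card (step S x) = 1"
  then obtain i where i: "step S x = {i}" by (auto simp: card_Suc_eq)
  then have "i \<in> step S x" by simp
  then obtain j where "j \<in> S" "j \<noteq> i" "x j = x i" "i \<in> S" by (auto simp: step_def)
  then have "j \<in> step S x" by (auto simp: step_def)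
  with i \<open>j \<noteq> i\<close> show False by simp
qed

lemma card_step_le: "finite S \<Longrightarrow> card (step S x) \<le> card S"
  by (simp add: card_mono step_subset)

lemma sets_CC_val: "{s \<in> space (CC k). s j = v} \<in> sets (CC k)"
proof -
  have "(\<lambda>x. x j) \<in> measurable (CC k) (U k)"
    unfolding CC_def by (rule measurable_component_singleton) simp
  then have "(\<lambda>x. x j) -` {v} \<inter> space (CC k) \<in> sets (CC k)"
    by (rule measurable_sets) simp
  moreover have "(\<lambda>x. x j) -` {v} \<inter> space (CC k) = {s \<in> space (CC k). s j = v}" by auto
  ultimately show ?thesis by simp
qed

lemma sets_CC_eq: "{s \<in> space (CC k). s i = s j} \<in> sets (CC k)"
proof -
  have "{s \<in> space (CC k). s i = s j} =
     (\<Union>v::nat. {s \<in> space (CC k). s i = v} \<inter> {s \<in> space (CC k). s j = v})"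
    by auto
  also have "\<dots> \<in> sets (CC k)"
    using sets_CC_val by (intro sets.countable_UN') auto
  finally show ?thesis .
qed

definition Bset :: "nat \<Rightarrow> nat set \<Rightarrow> nat \<Rightarrow> (nat \<Rightarrow> nat) set" where
  "Bset k S i = {s \<in> space (CC k). i \<in> step S s}"

lemma sets_Bset: assumes "finite S" shows "Bset k S i \<in> sets (CC k)"
proof (cases "i \<in> S")
  case True
  have "Bset k S i = (\<Union>j\<in>S-{i}. {s \<in> space (CC k). s j = s i})"
    using True by (auto simp: Bset_def step_def)
  also have "\<dots> \<in> sets (CC k)" using assms sets_CC_eq by (intro sets.finite_UN) auto
  finally show ?thesis .
next
  case False
  then have "Bset k S i = {}" by (auto simp: Bset_def step_def)
  then show ?thesis by simp
qed

lemma measure_Bset: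
  assumes "finite S" "i \<in> S" "1 \<le> k"
  shows "measure (CC k) (Bset k S i) \<le> 1 - (1 - 1 / real k) ^ (card S - 1)"
proof -
  interpret P: prob_space "CC k" by (rule prob_CC)
  interpret PP: product_prob_space "\<lambda>_. U k" "UNIV :: nat set"
    by (rule product_prob_spaceI) (rule prob_U)
  define F where "F x j = (if j = i then {x} else {..<k} - {x})" for x j
  define P where "P x = prod_emb UNIV (\<lambda>_. U k) S (PiE S (F x))" for x
  have PB: "P x \<subseteq> space (CC k) - Bset k S i" for x
    using assms(2) by (auto simp: P_def prod_emb_def F_def Bset_def step_def PiE_iff split: if_splits)
  have Psets: "P x \<in> sets (CC k)" for x
    unfolding P_def CC_def using assms(1) by (intro sets_PiM_I) auto
  have U1: "measure (U k) {x} = 1 / real k" if "x < k" for x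
  proof -
    have "{..<k} \<noteq> {}" using that by auto
    then show ?thesis using that measure_pmf_of_set[of "{..<k}" "{x}"] by (simp add: U_def)
  qed
  have U2: "measure (U k) ({..<k} - {x}) = 1 - 1 / real k" if "x < k" for x
  proof -
    have "card ({..<k} \<inter> ({..<k} - {x})) = k - 1" using that by (simp add: Int_absorb1)
    moreover have "{..<k} \<noteq> {}" using that by auto
    ultimately have "measure (U k) ({..<k} - {x}) = real (k - 1) / real k"
      using measure_pmf_of_set[of "{..<k}" "{..<k} - {x}"] by (simp add: U_def)
    then show ?thesis using that by (simp add: of_nat_diff field_simps)
  qed
  have mP: "measure (CC k) (P x) = 1 / real k * (1 - 1 / real k) ^ (card S - 1)" if "x < k" for x
  proof -
    have "measure (CC k) (P x) = (\<Prod>j\<in>S. measure (U k) (F x j))"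
      unfolding P_def CC_def using assms(1) by (intro PP.measure_PiM_emb) auto
    also have "\<dots> = measure (U k) (F x i) * (\<Prod>j\<in>S-{i}. measure (U k) (F x j))"
      using assms by (simp add: prod.remove)
    also have "(\<Prod>j\<in>S-{i}. measure (U k) (F x j)) = (\<Prod>j\<in>S-{i}. 1 - 1 / real k)"
      using that by (intro prod.cong) (auto simp: F_def U2)
    also have "\<dots> = (1 - 1 / real k) ^ (card S - 1)" using assms by simp
    finally show ?thesis using that by (simp add: F_def U1)
  qed
  have disj: "disjoint_family_on P {..<k}"
    unfolding disjoint_family_on_def
  proof (intro ballI impI)
    fix x y assume "x \<in> {..<k}" "y \<in> {..<k}" "x \<noteq> y"
    show "P x \<inter> P y = {}"
    proof (rule ccontr)
      assume "P x \<inter> P y \<noteq> {}"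
      then obtain s where "s \<in> P x" "s \<in> P y" by blast
      then have "s i = x" "s i = y" using assms(2) by (auto simp: P_def prod_emb_def F_def PiE_iff)
      with \<open>x \<noteq> y\<close> show False by simp
    qed
  qed
  have "measure (CC k) (\<Union>x\<in>{..<k}. P x) = (\<Sum>x\<in>{..<k}. measure (CC k) (P x))"
    using disj Psets by (intro P.finite_measure_finite_Union) auto
  also have "\<dots> = (1 - 1 / real k) ^ (card S - 1)"
    using assms by (simp add: mP)
  finally have "(1 - 1 / real k) ^ (card S - 1) \<le> measure (CC k) (space (CC k) - Bset k S i)"
    using PB by (metis P.finite_measure_mono UN_least sets.top sets.Diff sets_Bset[OF assms(1)])
  also have "\<dots> = 1 - measure (CC k) (Bset k S i)"
    using P.prob_compl[OF sets_Bset[OF assms(1)]] by simp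
  finally show ?thesis by simp
qed

lemma card_step_sum: "finite S \<Longrightarrow> real (card (step S s)) = (\<Sum>i\<in>S. indicator (Bset k S i) s)"
proof -
  assume S: "finite S"
  have "(\<Sum>i\<in>S. indicator (Bset k S i) s :: real) = (\<Sum>i\<in>S. indicator (step S s) i)"
    by (intro sum.cong) (auto simp: Bset_def indicator_def)
  also have "\<dots> = (\<Sum>i\<in>S. real (indicator (step S s) i))"
    by (intro sum.cong) (auto simp: indicator_def)
  also have "\<dots> = real (card (S \<inter> step S s))"
    using sum_indicator_eq_card[OF S, of "step S s"] by (metis of_nat_sum)
  also have "S \<inter> step S s = step S s" using step_subset by blast
  finally show ?thesis by simp
qed

lemma lin_bound:
  assumes S: "finite S" and k: "1 \<le> k" and ab: "0 \<le> \<alpha>" "0 \<le> \<beta>"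
  shows "(\<integral>\<^sup>+ s. ennreal (\<alpha> + \<beta> * real (card (step S s))) \<partial>CC k)
     \<le> ennreal (\<alpha> + \<beta> * (real (card S) * (1 - (1 - 1 / real k) ^ (card S - 1))))"
proof -
  interpret P: prob_space "CC k" by (rule prob_CC)
  define f where "f s = \<alpha> + \<beta> * (\<Sum>i\<in>S. indicator (Bset k S i) s)" for s
  have indint: "integrable (CC k) (indicator (Bset k S i) :: _ \<Rightarrow> real)" for i
    using sets_Bset[OF S] by (intro integrable_real_indicator) (auto simp: P.emeasure_eq_measure)
  have sumint: "integrable (CC k) (\<lambda>s. \<Sum>i\<in>S. indicator (Bset k S i) s :: real)"
    by (rule Bochner_Integration.integrable_sum) (rule indint)
  have int: "integrable (CC k) f"
    unfolding f_def using sumint by (intro Bochner_Integration.integrable_add Bochner_Integration.integrable_mult_right P.integrable_const) auto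
  have "(\<integral>\<^sup>+ s. ennreal (\<alpha> + \<beta> * real (card (step S s))) \<partial>CC k) = (\<integral>\<^sup>+ s. ennreal (f s) \<partial>CC k)"
    using S by (simp add: f_def card_step_sum[OF S, where k=k])
  also have "\<dots> = ennreal (integral\<^sup>L (CC k) f)"
    using int by (rule nn_integral_eq_integral) (use ab in \<open>auto simp: f_def intro!: AE_I2 sum_nonneg add_nonneg_nonneg mult_nonneg_nonneg\<close>)
  also have "integral\<^sup>L (CC k) f = \<alpha> + \<beta> * (\<Sum>i\<in>S. measure (CC k) (Bset k S i))"
    unfolding f_def using S sets_Bset[OF S] sumint indint
    using P.prob_space by (subst Bochner_Integration.integral_add) (auto simp: Bochner_Integration.integral_sum)
  also have "\<dots> \<le> \<alpha> + \<beta> * (real (card S) * (1 - (1 - 1 / real k) ^ (card S - 1)))"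
  proof -
    have "(\<Sum>i\<in>S. measure (CC k) (Bset k S i)) \<le> (\<Sum>i\<in>S. 1 - (1 - 1 / real k) ^ (card S - 1))"
      using measure_Bset[OF S _ k] by (intro sum_mono) auto
    then show ?thesis using ab by (simp add: mult_left_mono)
  qed
  finally show ?thesis by (simp add: ennreal_leI)
qed

lemma drift_prob:
  assumes S: "finite S" and m: "2 \<le> card S" "card S \<le> k"
  shows "(\<integral>\<^sup>+ s. ennreal (G k (card (step S s))) \<partial>CC k) \<le> ennreal (G k (card S) - 1)"
proof -
  obtain \<alpha> \<beta> where ab: "0 \<le> \<alpha>" "0 \<le> \<beta>"
    and pt: "\<And>j. j = 0 \<or> (2 \<le> j \<and> j \<le> card S) \<Longrightarrow> G k j \<le> \<alpha> + \<beta> * real j"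
    and fin: "\<alpha> + \<beta> * (real (card S) * (1 - (1 - 1 / real k) ^ (card S - 1))) \<le> G k (card S) - 1"
    using drift_real[OF m] by blast
  have "(\<integral>\<^sup>+ s. ennreal (G k (card (step S s))) \<partial>CC k) \<le> (\<integral>\<^sup>+ s. ennreal (\<alpha> + \<beta> * real (card (step S s))) \<partial>CC k)"
  proof (intro nn_integral_mono ennreal_leI pt)
    fix s
    have "card (step S s) \<noteq> 1" "card (step S s) \<le> card S" using S card_step_ne1 card_step_le by auto
    then show "card (step S s) = 0 \<or> 2 \<le> card (step S s) \<and> card (step S s) \<le> card S" by linarith
  qed
  also have "\<dots> \<le> ennreal (\<alpha> + \<beta> * (real (card S) * (1 - (1 - 1 / real k) ^ (card S - 1))))"
    using m by (intro lin_bound S ab) auto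
  also have "\<dots> \<le> ennreal (G k (card S) - 1)" using fin by (rule ennreal_leI)
  finally show ?thesis .
qed

lemma space_chan[simp]: "space (chan_space k) = UNIV"
  by (simp add: chan_space_CC space_PiM)

lemma sets_CC_step_eq:
  assumes "finite B"
  shows "{s \<in> space (CC k). step B s = A} \<in> sets (CC k)"
proof (cases "A \<subseteq> B")
  case True
  define E where "E i = (\<Union>j\<in>B-{i}. {s \<in> space (CC k). s j = s i})" for i
  have E: "E i \<in> sets (CC k)" for i
    unfolding E_def using assms by (intro sets.finite_UN sets_CC_eq) auto
  have "{s \<in> space (CC k). step B s = A} =
     {s \<in> space (CC k). \<forall>i\<in>B. s \<in> (if i \<in> A then E i else space (CC k) - E i)}"
    using True by (auto simp: step_def E_def split: if_splits)
  also have "\<dots> \<in> sets (CC k)"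
  proof (rule sets.sets_Collect_finite_All[OF _ assms])
    fix i show "{s \<in> space (CC k). s \<in> (if i \<in> A then E i else space (CC k) - E i)} \<in> sets (CC k)"
      using E[of i] sets.compl_sets[OF E[of i]] by auto
  qed
  finally show ?thesis .
next
  case False
  then have "{s \<in> space (CC k). step B s = A} = {}"
    using step_subset by blast
  then show ?thesis by (simp only:) simp
qed

lemma meas_card_step:
  assumes S: "finite S"
  shows "(\<lambda>s. card (step S s)) \<in> measurable (CC k) (count_space UNIV)"
proof (subst measurable_count_space_eq2_countable, intro conjI ballI)
  show "(\<lambda>s. card (step S s)) \<in> space (CC k) \<rightarrow> UNIV" by simp
  fix j :: nat
  have "(\<lambda>s. card (step S s)) -` {j} \<inter> space (CC k) =
     (\<Union>B\<in>{B\<in>Pow S. card B = j}. {s \<in> space (CC k). step S s = B})"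
    using step_subset[of S] by auto
  also have "\<dots> \<in> sets (CC k)"
    using S by (intro sets.finite_UN sets_CC_step_eq) auto
  finally show "(\<lambda>s. card (step S s)) -` {j} \<inter> space (CC k) \<in> sets (CC k)" .
qed

lemma meas_G_step:
  assumes S: "finite S"
  shows "(\<lambda>s. ennreal (G k (card (step S s)))) \<in> borel_measurable (CC k)"
  using measurable_compose[OF meas_card_step[OF S, of k] borel_measurable_count_space[of "\<lambda>j. ennreal (G k j)" UNIV]] by simp

definition ct :: "nat \<Rightarrow> nat set \<Rightarrow> (nat \<Rightarrow> nat \<Rightarrow> nat) \<Rightarrow> ennreal" where
  "ct N S \<omega> = (\<Sum>t<N. if pend S \<omega> t = {} then 0 else 1)"

lemma ct_Suc: "ct (Suc N) S (case_nat s \<omega>) = (if S = {} then 0 else 1) + ct N (step S s) \<omega>"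
  unfolding ct_def by (subst sum.lessThan_Suc_shift) (simp add: pend_shift del: pend.simps(2))

lemma meas_ct: assumes "finite S" shows "ct N S \<in> borel_measurable (chan_space k)"
proof -
  have "ct N S \<omega> = (\<Sum>t<N. indicator (UNIV - {\<omega> \<in> space (chan_space k). pend S \<omega> t = {}}) \<omega>)" for \<omega>
    unfolding ct_def by (intro sum.cong) (auto simp: indicator_def)
  then have "ct N S = (\<lambda>\<omega>. \<Sum>t<N. indicator (UNIV - {\<omega> \<in> space (chan_space k). pend S \<omega> t = {}}) \<omega>)"
    by (intro ext)
  also have "\<dots> \<in> borel_measurable (chan_space k)"
    using sets.compl_sets[OF sets_pend_eq[OF assms, of k _ "{}"]] by (intro borel_measurable_sum borel_measurable_indicator) auto
  finally show ?thesis .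
qed

lemma split_int:
  assumes h: "h \<in> borel_measurable (chan_space k)"
  shows "(\<integral>\<^sup>+ \<omega>. h \<omega> \<partial>chan_space k) = (\<integral>\<^sup>+ s. (\<integral>\<^sup>+ \<omega>. h (case_nat s \<omega>) \<partial>chan_space k) \<partial>CC k)"
proof -
  interpret SQ: sequence_space "CC k"
    unfolding sequence_space_def by (rule product_prob_spaceI) (rule prob_CC)
  interpret PS: prob_space "chan_space k" unfolding chan_space_CC by (rule prob_space_PiM) (rule prob_CC)
  have F: "(\<lambda>(s, \<omega>). case_nat s \<omega>) \<in> measurable (CC k \<Otimes>\<^sub>M chan_space k) (chan_space k)"
    unfolding chan_space_CC split_beta' by (rule measurable_case_nat') auto
  have "(\<integral>\<^sup>+ \<omega>. h \<omega> \<partial>chan_space k) = (\<integral>\<^sup>+ \<omega>. h \<omega> \<partial>distr (CC k \<Otimes>\<^sub>M chan_space k) (chan_space k) (\<lambda>(s, \<omega>). case_nat s \<omega>))"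
    unfolding chan_space_CC SQ.PiM_iter ..
  also have "\<dots> = (\<integral>\<^sup>+ x. h (case_nat (fst x) (snd x)) \<partial>(CC k \<Otimes>\<^sub>M chan_space k))"
    using F h by (subst nn_integral_distr) (auto simp: split_beta')
  also have "\<dots> = (\<integral>\<^sup>+ s. (\<integral>\<^sup>+ \<omega>. h (case_nat s \<omega>) \<partial>chan_space k) \<partial>CC k)"
    using measurable_comp[OF F h] by (subst PS.nn_integral_fst[symmetric]) (auto simp: split_beta' comp_def)
  finally show ?thesis .
qed

lemma prob_chan: "prob_space (chan_space k)"
  unfolding chan_space_CC by (rule prob_space_PiM) (rule prob_CC)

lemma G_ge1: assumes "2 \<le> k" "2 \<le> m" shows "1 \<le> G k m"
proof -
  have "0 \<le> ln (real m / 2)" using assms by simp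
  then have "0 \<le> ln (real m / 2) / cc" using cc_pos by simp
  then show ?thesis using assms aa_facts(2)[OF assms(1)] by (simp add: G_def)
qed

lemma step_card1: "card S = 1 \<Longrightarrow> step S s = {}"
  by (auto simp: step_def card_Suc_eq)

lemma T_bound:
  assumes k: "2 \<le> k"
  shows "finite S \<Longrightarrow> card S \<le> k \<Longrightarrow> (\<integral>\<^sup>+ \<omega>. ct N S \<omega> \<partial>chan_space k) \<le> ennreal (G k (card S))"
proof (induction N arbitrary: S)
  case 0
  then show ?case by (simp add: ct_def)
next
  case (Suc N)
  interpret PS: prob_space "chan_space k" by (rule prob_chan)
  interpret PC: prob_space "CC k" by (rule prob_CC)
  define c :: ennreal where "c = (if S = {} then 0 else 1)"
  have fin: "finite (step S s)" for s using Suc.prems(1) step_subset finite_subset by blast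
  have "(\<integral>\<^sup>+ \<omega>. ct (Suc N) S \<omega> \<partial>chan_space k) = (\<integral>\<^sup>+ s. (\<integral>\<^sup>+ \<omega>. ct (Suc N) S (case_nat s \<omega>) \<partial>chan_space k) \<partial>CC k)"
    by (rule split_int[OF meas_ct[OF Suc.prems(1)]])
  also have "\<dots> = (\<integral>\<^sup>+ s. (c + (\<integral>\<^sup>+ \<omega>. ct N (step S s) \<omega> \<partial>chan_space k)) \<partial>CC k)"
  proof (intro nn_integral_cong)
    fix s
    have "(\<integral>\<^sup>+ \<omega>. ct (Suc N) S (case_nat s \<omega>) \<partial>chan_space k) = (\<integral>\<^sup>+ \<omega>. (c + ct N (step S s) \<omega>) \<partial>chan_space k)"
      by (simp add: ct_Suc c_def)
    also have "\<dots> = (\<integral>\<^sup>+ \<omega>. c \<partial>chan_space k) + (\<integral>\<^sup>+ \<omega>. ct N (step S s) \<omega> \<partial>chan_space k)"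
      using meas_ct[OF fin] by (intro nn_integral_add) auto
    also have "(\<integral>\<^sup>+ \<omega>. c \<partial>chan_space k) = c" using PS.emeasure_space_1 by simp
    finally show "(\<integral>\<^sup>+ \<omega>. ct (Suc N) S (case_nat s \<omega>) \<partial>chan_space k) = c + (\<integral>\<^sup>+ \<omega>. ct N (step S s) \<omega> \<partial>chan_space k)" .
  qed
  also have "\<dots> \<le> (\<integral>\<^sup>+ s. (c + ennreal (G k (card (step S s)))) \<partial>CC k)"
  proof (intro nn_integral_mono add_left_mono Suc.IH fin)
    fix s show "card (step S s) \<le> k" using card_step_le[OF Suc.prems(1)] Suc.prems(2) by (rule le_trans)
  qed
  also have "\<dots> = c + (\<integral>\<^sup>+ s. ennreal (G k (card (step S s))) \<partial>CC k)"
    using meas_G_step[OF Suc.prems(1)] PC.emeasure_space_1 by (subst nn_integral_add) auto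
  also have "\<dots> \<le> ennreal (G k (card S))"
  proof -
    consider "card S = 0" | "card S = 1" | "2 \<le> card S" by linarith
    then show ?thesis
    proof cases
      case 1
      then have "S = {}" using Suc.prems(1) by simp
      then show ?thesis by (simp add: c_def step_def G_def)
    next
      case 2
      then have "S \<noteq> {}" by auto
      then show ?thesis using 2 by (simp add: c_def step_card1 G_def)
    next
      case 3
      then have "S \<noteq> {}" by auto
      have "c + (\<integral>\<^sup>+ s. ennreal (G k (card (step S s))) \<partial>CC k) \<le> 1 + ennreal (G k (card S) - 1)"
        using \<open>S \<noteq> {}\<close> drift_prob[OF Suc.prems(1) 3 Suc.prems(2)] by (simp add: c_def add_left_mono)
      also have "\<dots> = ennreal (G k (card S))"
      proof -
        have "ennreal (1 + (G k (card S) - 1)) = ennreal 1 + ennreal (G k (card S) - 1)"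
          using G_ge1[OF k 3] by (intro ennreal_plus) auto
        then show ?thesis by simp
      qed
      finally show ?thesis .
    qed
  qed
  finally show ?case .
qed

lemma pend_mono_Suc: "pend S \<omega> (Suc t) \<subseteq> pend S \<omega> t"
  by (simp add: step_subset)

lemma pend_empty_persist: "pend S \<omega> t = {} \<Longrightarrow> t \<le> t' \<Longrightarrow> pend S \<omega> t' = {}"
proof -
  assume a: "pend S \<omega> t = {}" "t \<le> t'"
  have "pend S \<omega> (t + d) = {}" for d
    by (induction d) (use a in \<open>auto simp: step_def\<close>)
  then show ?thesis using a(2) by (metis le_add_diff_inverse)
qed

lemma ct_Suc_last: "ct (Suc N) S \<omega> = ct N S \<omega> + (if pend S \<omega> N = {} then 0 else 1)"
  by (simp add: ct_def)

lemma completion_SUP: "completion_time n \<omega> = (SUP N. ct N {..<n} \<omega>)"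
proof (cases "\<exists>t. pend {..<n} \<omega> t = {}")
  case True
  define t0 where "t0 = (LEAST t. pend {..<n} \<omega> t = {})"
  have t0: "pend {..<n} \<omega> t0 = {}" unfolding t0_def by (rule LeastI_ex[OF True])
  have lt: "pend {..<n} \<omega> t \<noteq> {}" if "t < t0" for t using that unfolding t0_def by (rule not_less_Least)
  have ctm: "ct N {..<n} \<omega> = of_nat (min N t0)" for N
  proof (induction N)
    case 0 then show ?case by (simp add: ct_def)
  next
    case (Suc N)
    show ?case
    proof (cases "N < t0")
      case True then show ?thesis using Suc lt[OF True] by (simp add: ct_Suc_last min_def)
    next
      case False
      then have "pend {..<n} \<omega> N = {}" using pend_empty_persist[OF t0] by simp
      then show ?thesis using Suc False by (simp add: ct_Suc_last min_def)
    qed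
  qed
  have "(SUP N. ct N {..<n} \<omega>) = of_nat t0"
  proof (rule antisym)
    show "(SUP N. ct N {..<n} \<omega>) \<le> of_nat t0" by (rule SUP_least) (simp add: ctm)
    show "of_nat t0 \<le> (SUP N. ct N {..<n} \<omega>)" by (rule SUP_upper2[of t0]) (auto simp: ctm)
  qed
  then show ?thesis using True by (simp add: completion_time_def pending_pend t0_def)
next
  case False
  have ctm: "ct N {..<n} \<omega> = of_nat N" for N
  proof (induction N)
    case (Suc N)
    have "pend {..<n} \<omega> N \<noteq> {}" using False by blast
    then show ?case using Suc by (simp add: ct_Suc_last)
  qed (simp add: ct_def)
  then show ?thesis using False by (simp add: completion_time_def pending_pend ennreal_SUP_of_nat_eq_top)
qed

theorem lemma8:
  fixes k n :: nat
  assumes "2 \<le> k" and "2 \<le> n" and "n \<le> k"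
  shows "(\<integral>\<^sup>+ \<omega>. completion_time n \<omega> \<partial>chan_space k)
           \<le> ennreal (ln (real n / 2) / (1 - ln (exp 1 - 1)) + inverse (1 - 1 / real k))"
proof -
  have "(\<integral>\<^sup>+ \<omega>. completion_time n \<omega> \<partial>chan_space k) = (\<integral>\<^sup>+ \<omega>. (SUP N. ct N {..<n} \<omega>) \<partial>chan_space k)"
    by (simp add: completion_SUP)
  also have "\<dots> = (SUP N. (\<integral>\<^sup>+ \<omega>. ct N {..<n} \<omega> \<partial>chan_space k))"
  proof (rule nn_integral_monotone_convergence_SUP)
    show "incseq (\<lambda>N. ct N {..<n})"
      by (rule incseq_SucI) (simp add: le_fun_def ct_Suc_last)
    show "ct N {..<n} \<in> borel_measurable (chan_space k)" for N by (rule meas_ct) simp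
  qed
  also have "\<dots> \<le> ennreal (G k n)"
    using T_bound[OF assms(1), of "{..<n}"] assms by (intro SUP_least) simp
  also have "G k n = ln (real n / 2) / (1 - ln (exp 1 - 1)) + inverse (1 - 1 / real k)"
    using assms by (simp add: G_def cc_def aa_def)
  finally show ?thesis .
qed


end
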